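(* Let $N\ge3$, $h=1/N$, $\rho_j=jh$, $I_j=[\rho_{j-1},\rho_j]$ ($j=1,\dots,N$, with $\rho_0\equiv\rho_N$ on $\mathbb{T}=\mathbb{R}/\mathbb{Z}$), and let $\mathbb{K}^h$ be the space of continuous periodic functions on $\mathbb{T}$ that are linear on each $I_j$. Let $\tau>0$ be arbitrary. Let $(\boldsymbol{X}^m,V^m,\kappa^m)\in[\mathbb{K}^h]^2\times\mathbb{K}^h\times\mathbb{K}^h$, $m\ge0$, be a sequence (with all segment lengths $|\boldsymbol{h}^m_j|>0$) such that for every $m\ge0$, $$\Big(\boldsymbol{n}^m\cdot\tfrac{\boldsymbol{X}^{m+1}-\boldsymbol{X}^m}{\tau},\phi^h\Big)_{\Gamma^m}=\big(V^{m+1},\phi^h\big)_{\Gamma^m}\quad\forall\phi^h\in\mathbb{K}^h,$$ $$\big(V^{m+1}\boldsymbol{n}^m,\boldsymbol{\omega}^h\big)_{\Gamma^m}=\Big(-\partial_s\kappa^{m+1}\,\boldsymbol{n}^m+\tfrac12(\kappa^{m+1})^2\partial_s\boldsymbol{X}^{m+1},\,\partial_s\boldsymbol{\omega}^h\Big)_{\Gamma^m}\quad\forall\boldsymbol{\omega}^h\in[\mathbb{K}^h]^2,$$ $$\Big(\tfrac{\kappa^{m+1}-\kappa^m}{\tau},\psi^h\Big)_{\Gamma^m}=\Big(\boldsymbol{n}^m\cdot\partial_s\big(\tfrac{\boldsymbol{X}^{m+1}-\boldsymbol{X}^m}{\tau}\big),\partial_s\psi^h\Big)_{\Gamma^m}-\Big(\big(\partial_s\boldsymbol{X}^{m+1}\cdot\partial_s\big(\tfrac{\boldsymbol{X}^{m+1}-\boldsymbol{X}^m}{\tau}\big)\big)\kappa^{m+1},\psi^h\Big)_{\Gamma^m}\quad\forall\psi^h\in\mathbb{K}^h.$$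 Define $W^m:=\tfrac14\sum_{j=1}^N|\boldsymbol{h}^m_j|\big[(\kappa^m(\rho_{j-1}))^2+(\kappa^m(\rho_j))^2\big]$. Then, without any restriction on $\tau$, $W^{m+1}\le W^m\le W^0$ for all $m\ge0$.
   Context: For $\boldsymbol{X}^m\in[\mathbb{K}^h]^2$, the polygon $\Gamma^m=\boldsymbol{X}^m(\mathbb{T})$ has edges $\boldsymbol{h}^m_j=\boldsymbol{X}^m(\rho_j)-\boldsymbol{X}^m(\rho_{j-1})$. In all expressions with subscript $\Gamma^m$ the discrete arc-length derivative is taken with respect to $\Gamma^m$: for $u\in\mathbb{K}^h$ (or $[\mathbb{K}^h]^2$), $\partial_s u|_{I_j}=\frac{u(\rho_j)-u(\rho_{j-1})}{|\boldsymbol{h}^m_j|}$; in particular $\partial_s\boldsymbol{X}^{m+1}|_{I_j}=\boldsymbol{h}^{m+1}_j/|\boldsymbol{h}^m_j|$. The normal is $\boldsymbol{n}^m|_{I_j}=-(\boldsymbol{h}^m_j)^\perp/|\boldsymbol{h}^m_j|$ with $(u_1,u_2)^\perp=(-u_2,u_1)$. Mass-lumped inner product: $(u,v)_{\Gamma^m}=\frac12\sum_{j=1}^N|\boldsymbol{h}^m_j|\big[(u\cdot v)(\rho_{j-1}^+)+(u\cdot v)(\rho_j^-)\big]$, one-sided limits taken within $I_j$. *)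

theory Defs
  imports "HOL-Analysis.Analysis"
begin

definition rho :: "nat \<Rightarrow> nat \<Rightarrow> real" where
  "rho N j = real j / real N"

text \<open>K^h: continuous 1-periodic functions (functions on the torus R/Z lifted to R)
  which are affine on each I_j = [rho_{j-1}, rho_j]. Continuity is automatic, as the
  affine pieces agree at the shared nodes.\<close>
definition Kh :: "nat \<Rightarrow> (real \<Rightarrow> real) set" where
  "Kh N = {f. (\<forall>x. f (x + 1) = f x) \<and>
     (\<forall>j\<in>{1..N}. \<exists>a b. \<forall>x\<in>{rho N (j - 1)..rho N j}. f x = a * x + b)}"

definition Kh2 :: "nat \<Rightarrow> (real \<Rightarrow> real^2) set" where
  "Kh2 N = {f. (\<lambda>x. f x $ 1) \<in> Kh N \<and> (\<lambda>x. f x $ 2) \<in> Kh N}"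

definition perp :: "real^2 \<Rightarrow> real^2" where
  "perp u = vector [- (u $ 2), u $ 1]"

definition hvec :: "nat \<Rightarrow> (real \<Rightarrow> real^2) \<Rightarrow> nat \<Rightarrow> real^2" where
  "hvec N X j = X (rho N j) - X (rho N (j - 1))"

definition len :: "nat \<Rightarrow> (real \<Rightarrow> real^2) \<Rightarrow> nat \<Rightarrow> real" where
  "len N X j = norm (hvec N X j)"

definition nrm :: "nat \<Rightarrow> (real \<Rightarrow> real^2) \<Rightarrow> nat \<Rightarrow> real^2" where
  "nrm N X j = - ((1 / len N X j) *\<^sub>R perp (hvec N X j))"

definition dsS :: "nat \<Rightarrow> (real \<Rightarrow> real^2) \<Rightarrow> (real \<Rightarrow> real) \<Rightarrow> nat \<Rightarrow> real" where
  "dsS N X u j = (u (rho N j) - u (rho N (j - 1))) / len N X j"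

definition dsV :: "nat \<Rightarrow> (real \<Rightarrow> real^2) \<Rightarrow> (real \<Rightarrow> real^2) \<Rightarrow> nat \<Rightarrow> real^2" where
  "dsV N X u j = (1 / len N X j) *\<^sub>R (u (rho N j) - u (rho N (j - 1)))"

text \<open>The integrand is given piecewise:
  F j x is its expression on I_j (evaluated at x), so F j (rho_{j-1}) and F j (rho_j)
  are the one-sided limits within I_j.\<close>
definition lump :: "nat \<Rightarrow> (real \<Rightarrow> real^2) \<Rightarrow> (nat \<Rightarrow> real \<Rightarrow> real) \<Rightarrow> real" where
  "lump N X F = (1 / 2) * (\<Sum>j = 1..N. len N X j * (F j (rho N (j - 1)) + F j (rho N j)))"

definition Wen :: "nat \<Rightarrow> (real \<Rightarrow> real^2) \<Rightarrow> (real \<Rightarrow> real) \<Rightarrow> real" where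
  "Wen N X k = (1 / 4) * (\<Sum>j = 1..N. len N X j * ((k (rho N (j - 1)))\<^sup>2 + (k (rho N j))\<^sup>2))"

end

theory Submission
  imports Defs
begin

lemma len_ineq:
  fixes a b :: "real^2" and L :: real
  assumes "L = norm b" "L > 0"
  shows "norm a * L \<le> L^2 + (a \<bullet> a - a \<bullet> b)"
proof -
  have "a \<bullet> b \<le> norm a * norm b" by (rule norm_cauchy_schwarz)
  moreover have "a \<bullet> a = (norm a)^2" by (simp add: power2_norm_eq_inner)
  moreover have "0 \<le> (norm a - L)^2" by simp
  ultimately show ?thesis using assms by (simp add: power2_eq_square algebra_simps)
qed

lemma step:
  fixes N :: nat and \<tau> :: real and X0 X1 dX :: "real \<Rightarrow> real^2" and v k0 k1 :: "real \<Rightarrow> real"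
  assumes tau: "\<tau> > 0"
    and lenpos: "\<And>j. j \<in> {1..N} \<Longrightarrow> len N X0 j > 0"
    and dX: "dX = (\<lambda>y. (1 / \<tau>) *\<^sub>R (X1 y - X0 y))"
    and e1: "lump N X0 (\<lambda>j x. (nrm N X0 j \<bullet> ((1 / \<tau>) *\<^sub>R (X1 x - X0 x))) * v x)
     = lump N X0 (\<lambda>j x. v x * v x)"
    and e2: "lump N X0 (\<lambda>j x. (v x *\<^sub>R nrm N X0 j) \<bullet> dX x)
     = lump N X0 (\<lambda>j x. ((- dsS N X0 k1 j) *\<^sub>R nrm N X0 j
            + ((1 / 2) * (k1 x)\<^sup>2) *\<^sub>R dsV N X0 X1 j) \<bullet> dsV N X0 dX j)"
    and e3: "lump N X0 (\<lambda>j x. ((k1 x - k0 x) / \<tau>) * k1 x)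
     = lump N X0 (\<lambda>j x. (nrm N X0 j \<bullet> dsV N X0 dX j) * dsS N X0 k1 j)
     - lump N X0 (\<lambda>j x. ((dsV N X0 X1 j \<bullet> dsV N X0 dX j) * k1 x) * k1 x)"
  shows "Wen N X1 k1 \<le> Wen N X0 k0"
proof -
  define L where "L j = len N X0 j" for j
  define ra where "ra j = rho N (j - 1)" for j
  define rb where "rb j = rho N j" for j
  define c where "c j = nrm N X0 j \<bullet> dsV N X0 dX j" for j
  define d where "d j = dsS N X0 k1 j" for j
  define A where "A j = dsV N X0 X1 j \<bullet> dsV N X0 dX j" for j
  define s1 where "s1 j = (k1 (ra j))^2 + (k1 (rb j))^2" for j
  define s0 where "s0 j = (k0 (ra j))^2 + (k0 (rb j))^2" for j
  define S1 where "S1 = (\<Sum>j=1..N. L j * s1 j)"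
  define S0 where "S0 = (\<Sum>j=1..N. L j * s0 j)"
  define SA where "SA = (\<Sum>j=1..N. L j * A j * s1 j)"
  define SC where "SC = (\<Sum>j=1..N. L j * c j * d j)"
  define ST where "ST = (\<Sum>j=1..N. L j * ((k1 (ra j) - k0 (ra j)) * k1 (ra j) + (k1 (rb j) - k0 (rb j)) * k1 (rb j)))"
  define SV where "SV = (\<Sum>j=1..N. L j * (v (ra j) * v (ra j) + v (rb j) * v (rb j)))"
  have rab: "rb (j - Suc 0) = ra j" for j unfolding ra_def rb_def by simp
  have Lpos: "j \<in> {1..N} \<Longrightarrow> L j > 0" for j using lenpos L_def by auto
  have SV0: "SV \<ge> 0" unfolding SV_def
  proof (rule sum_nonneg)
    fix j assume "j \<in> {1..N}"
    then have "L j \<ge> 0" using Lpos by (simp add: less_imp_le)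
    then show "0 \<le> L j * (v (ra j) * v (ra j) + v (rb j) * v (rb j))" by simp
  qed
  have l1: "lump N X0 (\<lambda>j x. v x * v x) = SV / 2"
    unfolding lump_def SV_def L_def ra_def rb_def by simp
  have l2a: "lump N X0 (\<lambda>j x. (v x *\<^sub>R nrm N X0 j) \<bullet> dX x)
     = lump N X0 (\<lambda>j x. (nrm N X0 j \<bullet> ((1 / \<tau>) *\<^sub>R (X1 x - X0 x))) * v x)"
    unfolding lump_def dX by (simp add: mult.commute)
  have l2b: "lump N X0 (\<lambda>j x. ((- dsS N X0 k1 j) *\<^sub>R nrm N X0 j
            + ((1 / 2) * (k1 x)\<^sup>2) *\<^sub>R dsV N X0 X1 j) \<bullet> dsV N X0 dX j)
       = (1/2) * (-2 * SC + (1/2) * SA)"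
    unfolding lump_def SC_def SA_def
    by (simp add: inner_add_left sum_distrib_left sum_subtractf[symmetric] sum.distrib[symmetric]
        c_def[symmetric] d_def[symmetric] A_def[symmetric] L_def[symmetric] ra_def[symmetric] rb_def[symmetric] s1_def rab
        algebra_simps)
  have l3a: "lump N X0 (\<lambda>j x. ((k1 x - k0 x) / \<tau>) * k1 x) = ST / (2 * \<tau>)"
    unfolding lump_def ST_def
    apply (simp add: sum_divide_distrib L_def[symmetric] ra_def[symmetric] rb_def[symmetric] rab add_divide_distrib algebra_simps)
    by (rule sum.cong) (use tau in \<open>simp_all add: field_simps\<close>)
  have l3b: "lump N X0 (\<lambda>j x. (nrm N X0 j \<bullet> dsV N X0 dX j) * dsS N X0 k1 j) = SC"
    unfolding lump_def SC_def
    by (simp add: sum_distrib_left c_def[symmetric] d_def[symmetric] L_def[symmetric] algebra_simps)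
  have l3c: "lump N X0 (\<lambda>j x. ((dsV N X0 X1 j \<bullet> dsV N X0 dX j) * k1 x) * k1 x) = SA / 2"
    unfolding lump_def SA_def
    by (simp add: sum_divide_distrib A_def[symmetric] L_def[symmetric] ra_def[symmetric] rb_def[symmetric] rab s1_def power2_eq_square algebra_simps)
  have E2: "-2 * SC + (1/2) * SA = SV" using e1 e2 l1 l2a l2b by simp
  have E3: "ST / (2 * \<tau>) = SC - SA / 2" using e3 l3a l3b l3c by simp
  have E3': "ST = \<tau> * (2 * SC - SA)" using E3 tau by (simp add: field_simps)
  have T: "S1 - S0 \<le> 2 * ST"
  proof -
    have "S1 - S0 = (\<Sum>j=1..N. L j * (s1 j - s0 j))"
      unfolding S1_def S0_def by (simp add: sum_subtractf[symmetric] algebra_simps)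
    also have "\<dots> \<le> (\<Sum>j=1..N. 2 * (L j * ((k1 (ra j) - k0 (ra j)) * k1 (ra j) + (k1 (rb j) - k0 (rb j)) * k1 (rb j))))"
    proof (rule sum_mono)
      fix j assume j: "j \<in> {1..N}"
      have sj: "s1 j - s0 j \<le> 2 * ((k1 (ra j) - k0 (ra j)) * k1 (ra j) + (k1 (rb j) - k0 (rb j)) * k1 (rb j))"
        unfolding s1_def s0_def
        using sum_squares_ge_zero[of "k1 (ra j) - k0 (ra j)" "k1 (rb j) - k0 (rb j)"]
        by (simp add: power2_eq_square algebra_simps)
      show "L j * (s1 j - s0 j) \<le> 2 * (L j * ((k1 (ra j) - k0 (ra j)) * k1 (ra j) + (k1 (rb j) - k0 (rb j)) * k1 (rb j)))"
        using mult_left_mono[OF sj less_imp_le[OF Lpos[OF j]]] by (simp only: mult.left_commute)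
    qed
    also have "\<dots> = 2 * ST" unfolding ST_def by (simp add: sum_distrib_left)
    finally show ?thesis .
  qed
  have main: "S1 + \<tau> * SA \<le> S0"
  proof -
    have tv: "\<tau> * SV \<ge> 0" using SV0 tau by simp
    have "2 * SC = SA / 2 - SV" using E2 by simp
    then have "\<tau> * (2 * SC) = \<tau> * (SA / 2 - SV)" by simp
    then have "ST = - \<tau> * SA / 2 - \<tau> * SV" unfolding E3' by (simp add: algebra_simps)
    then show ?thesis using T tv by linarith
  qed
  have pj: "len N X1 j * s1 j \<le> L j * s1 j + \<tau> * (L j * A j * s1 j)" if j: "j \<in> {1..N}" for j
  proof -
    define a where "a = hvec N X1 j"
    define b where "b = hvec N X0 j"
    have Lb: "L j = norm b" unfolding L_def b_def len_def ..
    have la: "len N X1 j = norm a" unfolding a_def len_def ..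
    have dv1: "dsV N X0 X1 j = (1 / L j) *\<^sub>R a"
      unfolding dsV_def a_def hvec_def L_def ..
    have dv2: "dsV N X0 dX j = (1 / L j) *\<^sub>R ((1/\<tau>) *\<^sub>R (a - b))"
      unfolding dsV_def a_def b_def hvec_def L_def dX by (simp add: algebra_simps)
    have LA: "\<tau> * L j * A j = (a \<bullet> a - a \<bullet> b) / L j"
      unfolding A_def dv1 dv2 using tau Lpos[OF j]
      by (simp add: inner_diff_right power2_eq_square field_simps)
    have "norm a * L j \<le> (L j)^2 + (a \<bullet> a - a \<bullet> b)"
      by (rule len_ineq[OF Lb Lpos[OF j]])
    then have "norm a \<le> L j + \<tau> * L j * A j"
      unfolding LA using Lpos[OF j] by (simp add: field_simps power2_eq_square)
    moreover have "s1 j \<ge> 0" unfolding s1_def by simp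
    ultimately have "norm a * s1 j \<le> (L j + \<tau> * L j * A j) * s1 j" by (rule mult_right_mono)
    then show ?thesis unfolding la by (simp add: algebra_simps)
  qed
  have "(\<Sum>j=1..N. len N X1 j * s1 j) \<le> (\<Sum>j=1..N. L j * s1 j + \<tau> * (L j * A j * s1 j))"
    by (rule sum_mono) (rule pj)
  also have "\<dots> = S1 + \<tau> * SA" unfolding S1_def SA_def by (simp add: sum.distrib sum_distrib_left)
  finally have "(\<Sum>j=1..N. len N X1 j * s1 j) \<le> S0" using main by simp
  then show ?thesis unfolding Wen_def S0_def s1_def s0_def L_def ra_def rb_def by simp
qed

lemma Kh2_diff:
  assumes "f \<in> Kh2 N" "g \<in> Kh2 N"
  shows "(\<lambda>y. c *\<^sub>R (f y - g y)) \<in> Kh2 N"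
proof -
  have K: "(\<lambda>x. c * (p x - q x)) \<in> Kh N" if "p \<in> Kh N" "q \<in> Kh N" for p q
  proof -
    have pp: "\<forall>x. p (x + 1) = p x" "\<forall>x. q (x + 1) = q x" using that unfolding Kh_def by auto
    have "\<exists>a b. \<forall>x\<in>{rho N (j - 1)..rho N j}. c * (p x - q x) = a * x + b" if j: "j \<in> {1..N}" for j
    proof -
      obtain a b where ab: "\<forall>x\<in>{rho N (j - 1)..rho N j}. p x = a * x + b"
        using \<open>p \<in> Kh N\<close> j unfolding Kh_def by blast
      obtain a' b' where ab': "\<forall>x\<in>{rho N (j - 1)..rho N j}. q x = a' * x + b'"
        using \<open>q \<in> Kh N\<close> j unfolding Kh_def by blast
      show ?thesis
        by (rule exI[of _ "c * (a - a')"], rule exI[of _ "c * (b - b')"]) (use ab ab' in \<open>simp add: algebra_simps\<close>)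
    qed
    then show ?thesis using pp unfolding Kh_def by simp
  qed
  show ?thesis using assms K unfolding Kh2_def by simp
qed

theorem theorem4p1:
  fixes N :: nat and \<tau> :: real
    and X :: "nat \<Rightarrow> real \<Rightarrow> real^2" and V \<kappa> :: "nat \<Rightarrow> real \<Rightarrow> real"
  assumes N3: "N \<ge> 3"
    and tau: "\<tau> > 0"
    and XK: "\<And>m. X m \<in> Kh2 N"
    and VK: "\<And>m. V m \<in> Kh N"
    and kK: "\<And>m. \<kappa> m \<in> Kh N"
    and lenpos: "\<And>m j. j \<in> {1..N} \<Longrightarrow> len N (X m) j > 0"
    and eq1: "\<And>m \<phi>. \<phi> \<in> Kh N \<Longrightarrow>
       lump N (X m) (\<lambda>j x. (nrm N (X m) j \<bullet> ((1 / \<tau>) *\<^sub>R (X (Suc m) x - X m x))) * \<phi> x)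
     = lump N (X m) (\<lambda>j x. V (Suc m) x * \<phi> x)"
    and eq2: "\<And>m \<omega>. \<omega> \<in> Kh2 N \<Longrightarrow>
       lump N (X m) (\<lambda>j x. (V (Suc m) x *\<^sub>R nrm N (X m) j) \<bullet> \<omega> x)
     = lump N (X m) (\<lambda>j x. ((- dsS N (X m) (\<kappa> (Suc m)) j) *\<^sub>R nrm N (X m) j
            + ((1 / 2) * (\<kappa> (Suc m) x)\<^sup>2) *\<^sub>R dsV N (X m) (X (Suc m)) j) \<bullet> dsV N (X m) \<omega> j)"
    and eq3: "\<And>m \<psi>. \<psi> \<in> Kh N \<Longrightarrow>
       lump N (X m) (\<lambda>j x. ((\<kappa> (Suc m) x - \<kappa> m x) / \<tau>) * \<psi> x)
     = lump N (X m) (\<lambda>j x. (nrm N (X m) j \<bullet>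
            dsV N (X m) (\<lambda>y. (1 / \<tau>) *\<^sub>R (X (Suc m) y - X m y)) j) * dsS N (X m) \<psi> j)
     - lump N (X m) (\<lambda>j x. ((dsV N (X m) (X (Suc m)) j \<bullet>
            dsV N (X m) (\<lambda>y. (1 / \<tau>) *\<^sub>R (X (Suc m) y - X m y)) j) * \<kappa> (Suc m) x) * \<psi> x)"
  shows "\<forall>m. Wen N (X (Suc m)) (\<kappa> (Suc m)) \<le> Wen N (X m) (\<kappa> m)
            \<and> Wen N (X m) (\<kappa> m) \<le> Wen N (X 0) (\<kappa> 0)"
proof -
  have st: "Wen N (X (Suc m)) (\<kappa> (Suc m)) \<le> Wen N (X m) (\<kappa> m)" for m
  proof (rule step[OF tau, where dX = "\<lambda>y. (1 / \<tau>) *\<^sub>R (X (Suc m) y - X m y)" and v = "V (Suc m)"])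
    show "\<And>j. j \<in> {1..N} \<Longrightarrow> len N (X m) j > 0" by (rule lenpos)
    show "lump N (X m) (\<lambda>j x. (nrm N (X m) j \<bullet> ((1 / \<tau>) *\<^sub>R (X (Suc m) x - X m x))) * V (Suc m) x)
     = lump N (X m) (\<lambda>j x. V (Suc m) x * V (Suc m) x)" by (rule eq1[OF VK])
    show "lump N (X m) (\<lambda>j x. (V (Suc m) x *\<^sub>R nrm N (X m) j) \<bullet> (1 / \<tau>) *\<^sub>R (X (Suc m) x - X m x))
     = lump N (X m) (\<lambda>j x. ((- dsS N (X m) (\<kappa> (Suc m)) j) *\<^sub>R nrm N (X m) j
            + ((1 / 2) * (\<kappa> (Suc m) x)\<^sup>2) *\<^sub>R dsV N (X m) (X (Suc m)) j) \<bullet> dsV N (X m) (\<lambda>y. (1 / \<tau>) *\<^sub>R (X (Suc m) y - X m y)) j)"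
      by (rule eq2[OF Kh2_diff[OF XK XK]])
    show "lump N (X m) (\<lambda>j x. ((\<kappa> (Suc m) x - \<kappa> m x) / \<tau>) * \<kappa> (Suc m) x)
     = lump N (X m) (\<lambda>j x. (nrm N (X m) j \<bullet> dsV N (X m) (\<lambda>y. (1 / \<tau>) *\<^sub>R (X (Suc m) y - X m y)) j) * dsS N (X m) (\<kappa> (Suc m)) j)
     - lump N (X m) (\<lambda>j x. ((dsV N (X m) (X (Suc m)) j \<bullet> dsV N (X m) (\<lambda>y. (1 / \<tau>) *\<^sub>R (X (Suc m) y - X m y)) j) * \<kappa> (Suc m) x) * \<kappa> (Suc m) x)"
      by (rule eq3[OF kK])
  qed simp
  have mono: "Wen N (X m) (\<kappa> m) \<le> Wen N (X 0) (\<kappa> 0)" for m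
  proof (induction m)
    case 0 then show ?case by simp
  next
    case (Suc m) then show ?case using st[of m] by linarith
  qed
  show ?thesis using st mono by blast
qed

end
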